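(* Let $F\colon[0,+\infty)\to[0,+\infty)$ be a continuous metric preserving function, let $X$ be an mm-space and $X^F:=(X,F\circ d_X,m_X)$. Then (1) $\sup_{\varepsilon>0}\alpha_{X^F}(2F(s)+\varepsilon)\le\alpha_X(s)$ for every $s>0$; (2) $\mathrm{OD}(X^F;-2\kappa)\le 4F(\mathrm{OD}(X;-\kappa))$ for every $\kappa>0$.
   Context: An mm-space is a triple $(X,d_X,m_X)$ with $(X,d_X)$ complete separable metric space and $m_X$ a Borel probability measure. $F\colon[0,+\infty)\to[0,+\infty)$ is metric preserving if $F\circ d$ is a metric for every metric $d$. For $A\subset X$, $r>0$: $U_r(A)=\{x: d_X(x,A)<r\}$. Concentration function: $\alpha_X(r):=\sup\{1-m_X(U_r(A)) : A\subset X \text{ Borel}, m_X(A)\ge 1/2\}$ (for $X^F$ neighborhoods are taken w.r.t. $F\circ d_X$). Partial diameter: for $\alpha\le 1$, $\mathrm{PD}(X;\alpha)$ is the infimum of $\operatorname{diam}A$ over Borel $A\subset X$ with $m_X(A)\ge\alpha$. Observable diameter: $\mathrm{OD}(X;-\kappa):=\sup_{f}\mathrm{PD}((\mathbb R,|\cdot|,f_*m_X);1-\kappa)$, the sup over all 1-Lipschitz $f\colon X\to\mathbb R$. *)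

theory Defs
  imports "HOL-Probability.Probability"
begin

definition metric_preserving :: "(real \<Rightarrow> real) \<Rightarrow> bool" where
  "metric_preserving F \<longleftrightarrow> (\<forall>t\<ge>0. F t \<ge> 0) \<and>
     (\<forall>(M::real set) d. Metric_space M d \<longrightarrow> Metric_space M (\<lambda>x y. F (d x y)))"

definition mm_space :: "'a set \<Rightarrow> ('a \<Rightarrow> 'a \<Rightarrow> real) \<Rightarrow> 'a measure \<Rightarrow> bool" where
  "mm_space M d m \<longleftrightarrow> Metric_space M d \<and> Metric_space.mcomplete M d \<and>
     separable_space (Metric_space.mtopology M d) \<and>
     prob_space m \<and> space m = M \<and>
     sets m = sigma_sets M {U. openin (Metric_space.mtopology M d) U}"

definition nbhd :: "'a set \<Rightarrow> ('a \<Rightarrow> 'a \<Rightarrow> real) \<Rightarrow> real \<Rightarrow> 'a set \<Rightarrow> 'a set" where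
  "nbhd M d r A = {x \<in> M. \<exists>a\<in>A. d x a < r}"

definition concentration :: "'a set \<Rightarrow> ('a \<Rightarrow> 'a \<Rightarrow> real) \<Rightarrow> 'a measure \<Rightarrow> real \<Rightarrow> real" where
  "concentration M d m r =
     Sup {1 - measure m (nbhd M d r A) | A. A \<in> sets m \<and> measure m A \<ge> 1/2}"

definition ediam :: "('a \<Rightarrow> 'a \<Rightarrow> real) \<Rightarrow> 'a set \<Rightarrow> ereal" where
  "ediam d A = (if A = {} then 0 else Sup {ereal (d x y) | x y. x \<in> A \<and> y \<in> A})"

definition partial_diameter :: "('a \<Rightarrow> 'a \<Rightarrow> real) \<Rightarrow> 'a measure \<Rightarrow> real \<Rightarrow> ereal" where
  "partial_diameter d m \<alpha> = Inf {ediam d A | A. A \<in> sets m \<and> measure m A \<ge> \<alpha>}"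

definition observable_diameter :: "'a set \<Rightarrow> ('a \<Rightarrow> 'a \<Rightarrow> real) \<Rightarrow> 'a measure \<Rightarrow> real \<Rightarrow> ereal" where
  "observable_diameter M d m \<kappa> =
     Sup {partial_diameter (\<lambda>s t. \<bar>s - t\<bar>) (distr m borel f) (1 - \<kappa>) | f.
            \<forall>x\<in>M. \<forall>y\<in>M. \<bar>f x - f y\<bar> \<le> d x y}"

end

theory Submission
  imports Defs
begin

lemma mp_F0:
  assumes "metric_preserving F" shows "F 0 = 0"
proof -
  have "Metric_space {0::real} (\<lambda>x y. 0)"
    by (unfold_locales) auto
  then have "Metric_space {0::real} (\<lambda>x y. F 0)"
    using assms unfolding metric_preserving_def by blast
  then show ?thesis using Metric_space.zero by fastforce
qed

lemma mp_nonneg: assumes "metric_preserving F" "t \<ge> 0" shows "F t \<ge> 0"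
  using assms unfolding metric_preserving_def by blast

lemma mp_le2:
  assumes "metric_preserving F" "0 \<le> t" "t \<le> u" shows "F t \<le> 2 * F u"
proof (cases "t = 0")
  case True then show ?thesis using mp_F0[OF assms(1)] mp_nonneg[OF assms(1), of u] assms by simp
next
  case False
  then have tp: "t > 0" using assms by simp
  define dd where "dd = (\<lambda>x y::real. if x = y then 0 else if (x = 0 \<and> y = 1) \<or> (x = 1 \<and> y = 0) then t else u)"
  have "Metric_space {0::real,1,2} dd"
    by unfold_locales (use tp assms in \<open>auto simp: dd_def\<close>)
  then have "Metric_space {0::real,1,2} (\<lambda>x y. F (dd x y))"
    using assms unfolding metric_preserving_def by blast
  then have "F (dd 0 1) \<le> F (dd 0 2) + F (dd 2 1)"
    by (rule Metric_space.triangle) auto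
  then show ?thesis by (simp add: dd_def)
qed



lemma mm_metric: "mm_space M d m \<Longrightarrow> Metric_space M d" by (simp add: mm_space_def)
lemma mm_prob: "mm_space M d m \<Longrightarrow> prob_space m" by (simp add: mm_space_def)
lemma mm_space_eq: "mm_space M d m \<Longrightarrow> space m = M" by (simp add: mm_space_def)

lemma mm_open_sets:
  assumes "mm_space M d m" "openin (Metric_space.mtopology M d) U" shows "U \<in> sets m"
  using assms unfolding mm_space_def by (auto intro: sigma_sets.Basic)

lemma mm_cont_meas:
  fixes h :: "'a \<Rightarrow> real"
  assumes mm: "mm_space M d m"
    and c: "\<And>x e. x \<in> M \<Longrightarrow> e > 0 \<Longrightarrow> \<exists>r>0. \<forall>y\<in>M. d x y < r \<longrightarrow> \<bar>h y - h x\<bar> < e"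
  shows "h \<in> borel_measurable m"
proof (rule borel_measurableI)
  fix S :: "real set" assume S: "open S"
  interpret Metric_space M d using mm_metric[OF mm] .
  have "openin mtopology {x\<in>M. h x \<in> S}"
    unfolding openin_mtopology
  proof (intro conjI allI impI)
    fix x assume x: "x \<in> {x\<in>M. h x \<in> S}"
    then have hx: "h x \<in> S" by blast
    obtain e where e: "e > 0" "\<And>y. dist y (h x) < e \<Longrightarrow> y \<in> S"
      using open_dist[THEN iffD1, OF S, rule_format, OF hx] by blast
    obtain r where r: "r > 0" "\<forall>y\<in>M. d x y < r \<longrightarrow> \<bar>h y - h x\<bar> < e"
      using c[of x e] x e(1) by blast
    have "mball x r \<subseteq> {x\<in>M. h x \<in> S}"
    proof
      fix y assume "y \<in> mball x r"
      then have "y \<in> M" "d x y < r" by auto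
      then have "\<bar>h y - h x\<bar> < e" using r by blast
      then have "h y \<in> S" using e(2)[of "h y"] by (simp add: dist_real_def)
      then show "y \<in> {x\<in>M. h x \<in> S}" using \<open>y \<in> M\<close> by blast
    qed
    then show "\<exists>r>0. mball x r \<subseteq> {x\<in>M. h x \<in> S}" using r by blast
  next
    show "{x\<in>M. h x \<in> S} \<subseteq> M" by blast
  qed
  moreover have "h -` S \<inter> space m = {x\<in>M. h x \<in> S}" using mm_space_eq[OF mm] by auto
  ultimately show "h -` S \<inter> space m \<in> sets m" using mm_open_sets[OF mm] by simp
qed

lemma prob_lim_le:
  fixes h :: "'a \<Rightarrow> real"
  assumes "prob_space m" "h \<in> borel_measurable m" "\<kappa> > 0"
  shows "\<exists>n::nat. measure m {x\<in>space m. h x \<le> real n} > 1 - \<kappa>"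
proof -
  interpret prob_space m by fact
  define A where "A = (\<lambda>n::nat. {x\<in>space m. h x \<le> real n})"
  have r: "range A \<subseteq> sets m" unfolding A_def using assms(2) by auto
  have inc: "incseq A" unfolding A_def incseq_def by auto
  have U: "(\<Union>i. A i) = space m"
  proof -
    have "x \<in> (\<Union>i. A i)" if "x \<in> space m" for x
      using that real_arch_simple[of "h x"] unfolding A_def by auto
    then show ?thesis unfolding A_def by auto
  qed
  have "(\<lambda>i. measure m (A i)) \<longlonglongrightarrow> 1"
    using finite_Lim_measure_incseq[OF r inc] U prob_space by simp
  then have "eventually (\<lambda>i. measure m (A i) > 1 - \<kappa>) sequentially"
    using assms(3) by (intro order_tendstoD) auto
  then obtain n where "measure m (A n) > 1 - \<kappa>" using eventually_sequentially by auto
  then show ?thesis unfolding A_def by blast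
qed



lemma ediam_le:
  assumes "c \<ge> 0" "\<And>x y. x \<in> A \<Longrightarrow> y \<in> A \<Longrightarrow> \<bar>x - y\<bar> \<le> c"
  shows "ediam (\<lambda>s t. \<bar>s - t\<bar>) A \<le> ereal c"
proof (cases "A = {}")
  case True then show ?thesis using assms by (simp add: ediam_def)
next
  case False
  have "Sup {ereal (\<bar>x - y\<bar>) | x y. x \<in> A \<and> y \<in> A} \<le> ereal c"
  proof (rule Sup_least)
    fix z assume "z \<in> {ereal (\<bar>x - y\<bar>) | x y. x \<in> A \<and> y \<in> A}"
    then obtain x y where "z = ereal (\<bar>x - y\<bar>)" "x \<in> A" "y \<in> A" by blast
    then show "z \<le> ereal c" using assms(2) by simp
  qed
  then show ?thesis unfolding ediam_def using False by simp
qed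

lemma ediam_ge:
  assumes "x \<in> A" "y \<in> A"
  shows "ereal (\<bar>x - y\<bar>) \<le> ediam (\<lambda>s t. \<bar>s - t\<bar>) A"
proof -
  have "A \<noteq> {}" using assms by blast
  moreover have "ereal (\<bar>x - y\<bar>) \<le> Sup {ereal (\<bar>x - y\<bar>) | x y. x \<in> A \<and> y \<in> A}"
    by (rule Sup_upper) (use assms in blast)
  ultimately show ?thesis unfolding ediam_def by simp
qed

lemma pd_le:
  assumes "I \<in> sets mu" "measure mu I \<ge> \<alpha>"
  shows "partial_diameter d mu \<alpha> \<le> ediam d I"
  unfolding partial_diameter_def by (rule Inf_lower) (use assms in blast)

lemma pd_nonneg: "partial_diameter (\<lambda>s t. \<bar>s - t\<bar>) mu \<alpha> \<ge> 0"
proof -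
  have *: "ediam (\<lambda>s t. \<bar>s - t\<bar>) A \<ge> 0" for A :: "real set"
  proof (cases "A = {}")
    case False
    then obtain a where "a \<in> A" by blast
    then have "ereal (\<bar>a - a\<bar>) \<le> ediam (\<lambda>s t. \<bar>s - t\<bar>) A" using ediam_ge by blast
    then show ?thesis by (simp add: zero_ereal_def[symmetric])
  qed (simp add: ediam_def)
  show ?thesis unfolding partial_diameter_def
    by (rule Inf_greatest) (use * in blast)
qed



lemma nbhdF_open:
  assumes cont: "continuous_on {0..} F" and mm: "mm_space M d m" and AM: "A \<subseteq> M"
  shows "openin (Metric_space.mtopology M d) (nbhd M (\<lambda>x y. F (d x y)) r A)"
proof -
  interpret Metric_space M d using mm_metric[OF mm] .
  show ?thesis unfolding openin_mtopology
  proof (intro conjI allI impI)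
    show "nbhd M (\<lambda>x y. F (d x y)) r A \<subseteq> M" by (auto simp: nbhd_def)
  next
    fix x assume "x \<in> nbhd M (\<lambda>x y. F (d x y)) r A"
    then obtain a where x: "x \<in> M" and a: "a \<in> A" "F (d x a) < r" by (auto simp: nbhd_def)
    have "d x a \<in> {0..}" by simp
    obtain \<eta> where eta: "\<eta> > 0" "\<And>t. t \<in> {0..} \<Longrightarrow> dist t (d x a) < \<eta> \<Longrightarrow> dist (F t) (F (d x a)) < r - F (d x a)"
    proof -
      have "r - F (d x a) > 0" using a(2) by simp
      from cont[unfolded continuous_on_iff, rule_format, OF \<open>d x a \<in> {0..}\<close> this]
      show ?thesis using that by blast
    qed
    have "mball x \<eta> \<subseteq> nbhd M (\<lambda>x y. F (d x y)) r A"
    proof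
      fix y assume "y \<in> mball x \<eta>"
      then have y: "y \<in> M" "d x y < \<eta>" by auto
      have aM: "a \<in> M" using a AM by blast
      have "d y a \<le> d y x + d x a" "d x a \<le> d x y + d y a"
        using triangle[OF y(1) x aM] triangle[OF x y(1) aM] by auto
      then have "dist (d y a) (d x a) < \<eta>" using y commute[of x y] by (simp add: dist_real_def abs_less_iff)
      then have "dist (F (d y a)) (F (d x a)) < r - F (d x a)" using eta(2)[of "d y a"] by simp
      then have "F (d y a) < r" by (simp add: dist_real_def abs_less_iff)
      then show "y \<in> nbhd M (\<lambda>x y. F (d x y)) r A" using y(1) a(1) unfolding nbhd_def by blast
    qed
    then show "\<exists>e>0. mball x e \<subseteq> nbhd M (\<lambda>x y. F (d x y)) r A" using eta(1) by blast
  qed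
qed

lemma part1:
  assumes cont: "continuous_on {0..} F" and mp: "metric_preserving F"
    and mm: "mm_space M d m" and s: "s > 0"
  shows "(SUP \<epsilon>\<in>{0<..}. concentration M (\<lambda>x y. F (d x y)) m (2 * F s + \<epsilon>))
                   \<le> concentration M d m s"
proof (rule cSUP_least)
  show "{0::real<..} \<noteq> {}" by auto
next
  fix \<epsilon> :: real assume "\<epsilon> \<in> {0<..}"
  then have ep: "\<epsilon> > 0" by simp
  interpret Metric_space M d using mm_metric[OF mm] .
  interpret prob_space m using mm_prob[OF mm] .
  have sp: "space m = M" using mm_space_eq[OF mm] .
  define S2 where "S2 = {1 - measure m (nbhd M d s A) | A. A \<in> sets m \<and> measure m A \<ge> 1/2}"
  have bdd: "bdd_above S2" unfolding S2_def by (rule bdd_aboveI[of _ 1]) auto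
  show "concentration M (\<lambda>x y. F (d x y)) m (2 * F s + \<epsilon>) \<le> concentration M d m s"
    unfolding concentration_def S2_def[symmetric]
  proof (rule cSup_least)
    have "M \<in> sets m" "measure m M \<ge> 1/2" using sp prob_space by auto
    then show "{1 - measure m (nbhd M (\<lambda>x y. F (d x y)) (2 * F s + \<epsilon>) A) | A. A \<in> sets m \<and> measure m A \<ge> 1/2} \<noteq> {}"
      by blast
  next
    fix z assume "z \<in> {1 - measure m (nbhd M (\<lambda>x y. F (d x y)) (2 * F s + \<epsilon>) A) | A. A \<in> sets m \<and> measure m A \<ge> 1/2}"
    then obtain A where z: "z = 1 - measure m (nbhd M (\<lambda>x y. F (d x y)) (2 * F s + \<epsilon>) A)"
      and A: "A \<in> sets m" "measure m A \<ge> 1/2" by blast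
    have AM: "A \<subseteq> M" using sets.sets_into_space[OF A(1)] sp by simp
    have sub: "nbhd M d s A \<subseteq> nbhd M (\<lambda>x y. F (d x y)) (2 * F s + \<epsilon>) A"
    proof
      fix x assume "x \<in> nbhd M d s A"
      then obtain a where "x \<in> M" "a \<in> A" "d x a < s" by (auto simp: nbhd_def)
      moreover have "F (d x a) \<le> 2 * F s" using mp_le2[OF mp, of "d x a" s] \<open>d x a < s\<close> by simp
      moreover have "F (d x a) < 2 * F s + \<epsilon>" using calculation(4) ep by linarith
      ultimately show "x \<in> nbhd M (\<lambda>x y. F (d x y)) (2 * F s + \<epsilon>) A" unfolding nbhd_def by blast
    qed
    have "nbhd M (\<lambda>x y. F (d x y)) (2 * F s + \<epsilon>) A \<in> sets m"
      by (rule mm_open_sets[OF mm nbhdF_open[OF cont mm AM]])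
    then have "measure m (nbhd M d s A) \<le> measure m (nbhd M (\<lambda>x y. F (d x y)) (2 * F s + \<epsilon>) A)"
      using finite_measure_mono[OF sub] by blast
    then have "z \<le> 1 - measure m (nbhd M d s A)" using z by simp
    also have "\<dots> \<le> Sup S2" using A by (intro cSup_upper[OF _ bdd]) (auto simp: S2_def)
    finally show "z \<le> Sup S2" .
  qed
qed



lemma inter_measure:
  assumes "prob_space m" "P \<in> sets m" "Q \<in> sets m"
  shows "measure m (P \<inter> Q) \<ge> measure m P + measure m Q - 1"
proof -
  interpret prob_space m by fact
  have "measure m (P \<union> Q) = measure m P + measure m Q - measure m (P \<inter> Q)"
    using measure_Un3[of P m Q] assms(2,3) fmeasurable_eq_sets by blast
  moreover have "measure m (P \<union> Q) \<le> 1" by simp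
  ultimately show ?thesis by linarith
qed

lemma keyK:
  assumes cont: "continuous_on {0..} F" and mp: "metric_preserving F"
    and mm: "mm_space M d m" and kp: "\<kappa> > 0"
    and OD: "observable_diameter M d m \<kappa> = ereal D" and D0: "D \<ge> 0"
    and g: "\<forall>x\<in>M. \<forall>y\<in>M. \<bar>g x - g y\<bar> \<le> F (d x y)"
    and gm: "g \<in> borel_measurable m"
    and Am: "measure m {x\<in>M. g x \<le> a} > \<kappa>" and dp: "\<delta> > 0"
  shows "measure m {x\<in>M. g x \<le> a + 2 * F (D + \<delta>)} \<ge> 1 - \<kappa>"
proof -
  interpret Metric_space M d using mm_metric[OF mm] .
  interpret prob_space m using mm_prob[OF mm] .
  have sp: "space m = M" using mm_space_eq[OF mm] .
  define A where "A = {x\<in>M. g x \<le> a}"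
  have gsets: "{x\<in>M. g x \<le> c} \<in> sets m" for c
  proof -
    have "{x\<in>space m. g x \<le> c} \<in> sets m" using gm by measurable
    then show ?thesis using sp by simp
  qed
  have Asets: "A \<in> sets m" unfolding A_def by (rule gsets)
  have "A \<noteq> {}"
  proof
    assume "A = {}" then show False using Am kp unfolding A_def[symmetric] by simp
  qed
  then obtain x0 where x0: "x0 \<in> A" by blast
  have AM: "A \<subseteq> M" unfolding A_def by blast
  define f where "f = (\<lambda>x. INF b\<in>A. d x b)"
  have bdd: "bdd_below ((d x) ` A)" for x by (rule bdd_belowI[of _ 0]) auto
  have fle: "f x \<le> d x b" if "b \<in> A" for x b
    unfolding f_def using that bdd by (intro cINF_lower) auto
  have fge: "f x \<ge> 0" for x
    unfolding f_def using \<open>A \<noteq> {}\<close> by (intro cINF_greatest) auto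
  have flip1: "f x \<le> f y + d x y" if "x \<in> M" "y \<in> M" for x y
  proof -
    have "f x - d x y \<le> (INF b\<in>A. d y b)"
    proof (intro cINF_greatest[OF \<open>A \<noteq> {}\<close>])
      fix b assume b: "b \<in> A"
      have "f x \<le> d x b" using fle[OF b] .
      also have "\<dots> \<le> d x y + d y b" using triangle[of x y b] that b AM by blast
      finally show "f x - d x y \<le> d y b" by simp
    qed
    then show ?thesis unfolding f_def by simp
  qed
  have flip: "\<bar>f x - f y\<bar> \<le> d x y" if "x \<in> M" "y \<in> M" for x y
    using flip1[OF that] flip1[OF that(2,1)] commute[of x y] by linarith
  have fm: "f \<in> borel_measurable m"
  proof (rule mm_cont_meas[OF mm])
    fix x e assume "x \<in> M" "(e::real) > 0"
    then show "\<exists>r>0. \<forall>y\<in>M. d x y < r \<longrightarrow> \<bar>f y - f x\<bar> < e"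
      using flip commute by (intro exI[of _ e]) (smt (verit))
  qed
  have "partial_diameter (\<lambda>s t. \<bar>s - t\<bar>) (distr m borel f) (1 - \<kappa>) \<le> observable_diameter M d m \<kappa>"
    unfolding observable_diameter_def by (rule Sup_upper) (use flip in blast)
  also have "\<dots> < ereal (D + \<delta>)" using OD dp by simp
  finally obtain J where J: "J \<in> sets (distr m borel f)" "measure (distr m borel f) J \<ge> 1 - \<kappa>"
      "ediam (\<lambda>s t. \<bar>s - t\<bar>) J < ereal (D + \<delta>)"
    unfolding partial_diameter_def Inf_less_iff by auto
  have Jb: "J \<in> sets borel" using J(1) by simp
  define J' where "J' = f -` J \<inter> M"
  have J'm: "measure m J' \<ge> 1 - \<kappa>" using J(2) measure_distr[OF fm Jb] sp unfolding J'_def by simp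
  have J's: "J' \<in> sets m" unfolding J'_def using measurable_sets[OF fm Jb] sp by simp
  have "A \<inter> J' \<noteq> {}"
  proof
    assume "A \<inter> J' = {}"
    then have "measure m A + measure m J' = measure m (A \<union> J')"
      using finite_measure_Union[OF Asets J's] by simp
    also have "\<dots> \<le> 1" by simp
    finally show False using Am J'm unfolding A_def[symmetric] by linarith
  qed
  then obtain z where z: "z \<in> A" "z \<in> J'" by blast
  have "f z = 0" using fle[OF z(1), of z] fge[of z] z(1) AM by force
  then have J0: "0 \<in> J" using z(2) unfolding J'_def by force
  have sub: "J' \<subseteq> {x\<in>M. g x \<le> a + 2 * F (D + \<delta>)}"
  proof
    fix x assume x: "x \<in> J'"
    then have xM: "x \<in> M" and fx: "f x \<in> J" unfolding J'_def by auto
    have "ereal \<bar>f x - 0\<bar> \<le> ediam (\<lambda>s t. \<bar>s - t\<bar>) J" using ediam_ge fx J0 by blast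
    then have "ereal \<bar>f x\<bar> < ereal (D + \<delta>)" using J(3) by (simp only: diff_zero)
    then have "f x < D + \<delta>" by simp
    then obtain b where b: "b \<in> A" "d x b < D + \<delta>"
      unfolding f_def using cINF_less_iff[OF \<open>A \<noteq> {}\<close> bdd] by blast
    have bM: "b \<in> M" using b AM by blast
    have "g x \<le> g b + F (d x b)" using g xM bM by (smt (verit))
    also have "F (d x b) \<le> 2 * F (D + \<delta>)" using mp_le2[OF mp, of "d x b" "D + \<delta>"] b(2) by simp
    finally have "g x \<le> a + 2 * F (D + \<delta>)" using b(1) unfolding A_def by simp
    then show "x \<in> {x\<in>M. g x \<le> a + 2 * F (D + \<delta>)}" using xM by blast
  qed
  have "{x\<in>M. g x \<le> a + 2 * F (D + \<delta>)} \<in> sets m" by (rule gsets)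
  then have "measure m J' \<le> measure m {x\<in>M. g x \<le> a + 2 * F (D + \<delta>)}"
    using finite_measure_mono[OF sub] by blast
  then show ?thesis using J'm by linarith
qed



lemma od_nonneg:
  assumes mm: "mm_space M d m" shows "observable_diameter M d m \<kappa> \<ge> 0"
proof -
  have "partial_diameter (\<lambda>s t. \<bar>s - t\<bar>) (distr m borel (\<lambda>x. 0::real)) (1 - \<kappa>) \<le> observable_diameter M d m \<kappa>"
    unfolding observable_diameter_def
  proof (rule Sup_upper)
    have "\<forall>x\<in>M. \<forall>y\<in>M. \<bar>(\<lambda>x. 0::real) x - (\<lambda>x. 0) y\<bar> \<le> d x y"
      using Metric_space.nonneg[OF mm_metric[OF mm]] by simp
    then show "partial_diameter (\<lambda>s t. \<bar>s - t\<bar>) (distr m borel (\<lambda>x. 0::real)) (1 - \<kappa>)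
      \<in> {partial_diameter (\<lambda>s t. \<bar>s - t\<bar>) (distr m borel f) (1 - \<kappa>) |f. \<forall>x\<in>M. \<forall>y\<in>M. \<bar>f x - f y\<bar> \<le> d x y}"
      by blast
  qed
  then show ?thesis using pd_nonneg order_trans by blast
qed

lemma od_fin:
  assumes mm: "mm_space M d m" and kp: "\<kappa> > 0"
  shows "\<exists>R. observable_diameter M d m \<kappa> \<le> ereal R"
proof -
  interpret Metric_space M d using mm_metric[OF mm] .
  interpret prob_space m using mm_prob[OF mm] .
  have sp: "space m = M" using mm_space_eq[OF mm] .
  obtain x0 where x0: "x0 \<in> M" using not_empty sp by blast
  have hm: "d x0 \<in> borel_measurable m"
  proof (rule mm_cont_meas[OF mm])
    fix x e assume x: "x \<in> M" "(e::real) > 0"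
    have "\<bar>d x0 y - d x0 x\<bar> \<le> d x y" if "y \<in> M" for y
      using triangle[OF x0 x(1) that] triangle[OF x0 that x(1)] commute[of x y] by linarith
    then show "\<exists>r>0. \<forall>y\<in>M. d x y < r \<longrightarrow> \<bar>d x0 y - d x0 x\<bar> < e"
      using x(2) by (intro exI[of _ e]) force
  qed
  obtain n :: nat where n: "measure m {x\<in>space m. d x0 x \<le> real n} > 1 - \<kappa>"
    using prob_lim_le[OF prob_space_axioms hm kp] by blast
  define B where "B = {x\<in>M. d x0 x \<le> real n}"
  have Bm: "measure m B > 1 - \<kappa>" using n sp unfolding B_def by simp
  have "observable_diameter M d m \<kappa> \<le> ereal (2 * real n)"
    unfolding observable_diameter_def
  proof (rule Sup_least)
    fix z assume "z \<in> {partial_diameter (\<lambda>s t. \<bar>s - t\<bar>) (distr m borel f) (1 - \<kappa>) |f. \<forall>x\<in>M. \<forall>y\<in>M. \<bar>f x - f y\<bar> \<le> d x y}"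
    then obtain f where z: "z = partial_diameter (\<lambda>s t. \<bar>s - t\<bar>) (distr m borel f) (1 - \<kappa>)"
      and f: "\<forall>x\<in>M. \<forall>y\<in>M. \<bar>f x - f y\<bar> \<le> d x y" by blast
    have fm: "f \<in> borel_measurable m"
    proof (rule mm_cont_meas[OF mm])
      fix x e assume x: "x \<in> M" "(e::real) > 0"
      then show "\<exists>r>0. \<forall>y\<in>M. d x y < r \<longrightarrow> \<bar>f y - f x\<bar> < e"
        using f commute by (intro exI[of _ e]) (smt (verit))
    qed
    define I where "I = {f x0 - real n .. f x0 + real n}"
    have Ib: "I \<in> sets borel" unfolding I_def by simp
    have "B \<subseteq> f -` I \<inter> space m"
    proof
      fix x assume "x \<in> B"
      then have x: "x \<in> M" "d x0 x \<le> real n" unfolding B_def by auto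
      have "\<bar>f x0 - f x\<bar> \<le> d x0 x" using f x0 x(1) by blast
      then show "x \<in> f -` I \<inter> space m" using x sp unfolding I_def by auto
    qed
    then have "measure m B \<le> measure m (f -` I \<inter> space m)"
      using finite_measure_mono measurable_sets[OF fm Ib] by blast
    then have "measure (distr m borel f) I \<ge> 1 - \<kappa>" using Bm measure_distr[OF fm Ib] by simp
    then have "z \<le> ediam (\<lambda>s t. \<bar>s - t\<bar>) I" unfolding z using Ib by (intro pd_le) auto
    also have "\<dots> \<le> ereal (2 * real n)" unfolding I_def by (rule ediam_le) auto
    finally show "z \<le> ereal (2 * real n)" .
  qed
  then show ?thesis by blast
qed



lemma part2:
  assumes cont: "continuous_on {0..} F" and mp: "metric_preserving F"
    and mm: "mm_space M d m" and kp: "\<kappa> > 0"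
  shows "observable_diameter M (\<lambda>x y. F (d x y)) m (2 * \<kappa>)
                 \<le> ereal (4 * F (real_of_ereal (observable_diameter M d m \<kappa>)))"
proof -
  interpret Metric_space M d using mm_metric[OF mm] .
  interpret prob_space m using mm_prob[OF mm] .
  have sp: "space m = M" using mm_space_eq[OF mm] .
  define D where "D = real_of_ereal (observable_diameter M d m \<kappa>)"
  obtain R where R: "observable_diameter M d m \<kappa> \<le> ereal R" using od_fin[OF mm kp] by blast
  have O0: "observable_diameter M d m \<kappa> \<ge> 0" using od_nonneg[OF mm] .
  have OD: "observable_diameter M d m \<kappa> = ereal D" unfolding D_def using R O0
    by (cases "observable_diameter M d m \<kappa>") auto
  have D0: "D \<ge> 0" using O0 OD by simp
  have FD0: "F D \<ge> 0" using mp_nonneg[OF mp D0] .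
  have "observable_diameter M (\<lambda>x y. F (d x y)) m (2 * \<kappa>) \<le> ereal (4 * F D)"
    unfolding observable_diameter_def
  proof (rule Sup_least, goal_cases)
    case (1 z)
    from 1 obtain g where z: "z = partial_diameter (\<lambda>s t. \<bar>s - t\<bar>) (distr m borel g) (1 - 2 * \<kappa>)"
      and g: "\<forall>x\<in>M. \<forall>y\<in>M. \<bar>g x - g y\<bar> \<le> F (d x y)" by blast
    show "z \<le> ereal (4 * F D)"
    proof (cases "\<kappa> \<ge> 1/2")
      case True
      have "z \<le> ediam (\<lambda>s t. \<bar>s - t\<bar>) {}" unfolding z using True by (intro pd_le) auto
      also have "\<dots> \<le> ereal (4 * F D)" using FD0 by (simp add: ediam_def)
      finally show "z \<le> ereal (4 * F D)" .
    next
      case False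
      then have k2: "\<kappa> < 1/2" by simp
      have gm: "g \<in> borel_measurable m"
      proof (rule mm_cont_meas[OF mm])
        fix x e assume x: "x \<in> M" "(e::real) > 0"
        have "(0::real) \<in> {0..}" by simp
        from cont[unfolded continuous_on_iff, rule_format, OF this x(2)]
        obtain r where r: "r > 0" "\<And>t. t \<in> {0..} \<Longrightarrow> dist t 0 < r \<Longrightarrow> dist (F t) (F 0) < e" by blast
        have "\<bar>g y - g x\<bar> < e" if "y \<in> M" "d x y < r" for y
        proof -
          have "\<bar>g y - g x\<bar> \<le> F (d y x)" using g that(1) x(1) by blast
          also have "\<dots> = F (d x y)" using commute by simp
          also have "\<dots> < e" using r(2)[of "d x y"] that(2) mp_F0[OF mp] by (simp add: dist_real_def)
          finally show ?thesis .
        qed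
        then show "\<exists>r>0. \<forall>y\<in>M. d x y < r \<longrightarrow> \<bar>g y - g x\<bar> < e" using r(1) by blast
      qed
      have ngm: "(\<lambda>x. - g x) \<in> borel_measurable m" using gm by measurable
      have ng: "\<forall>x\<in>M. \<forall>y\<in>M. \<bar>- g x - - g y\<bar> \<le> F (d x y)" using g by (smt (verit))
      have gsets: "{x\<in>M. g x \<le> c} \<in> sets m" "{x\<in>M. c \<le> g x} \<in> sets m" "{x\<in>M. \<bar>g x\<bar> \<le> c} \<in> sets m" for c
      proof -
        have "{x\<in>space m. g x \<le> c} \<in> sets m" "{x\<in>space m. c \<le> g x} \<in> sets m" "{x\<in>space m. \<bar>g x\<bar> \<le> c} \<in> sets m"
          using gm by measurable
        then show "{x\<in>M. g x \<le> c} \<in> sets m" "{x\<in>M. c \<le> g x} \<in> sets m" "{x\<in>M. \<bar>g x\<bar> \<le> c} \<in> sets m" using sp by simp_all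
      qed
      have agm: "(\<lambda>x. \<bar>g x\<bar>) \<in> borel_measurable m" using gm by measurable
      obtain n :: nat where n: "measure m {x\<in>space m. \<bar>g x\<bar> \<le> real n} > 1 - \<kappa>"
        using prob_lim_le[OF prob_space_axioms agm kp] by blast
      define Rn where "Rn = real n"
      have nM: "measure m {x\<in>M. \<bar>g x\<bar> \<le> Rn} > 1 - \<kappa>" using n sp Rn_def by simp
      define T where "T = {t. measure m {x\<in>M. g x \<le> t} > \<kappa>}"
      have RT: "Rn \<in> T"
      proof -
        have "measure m {x\<in>M. \<bar>g x\<bar> \<le> Rn} \<le> measure m {x\<in>M. g x \<le> Rn}"
          by (rule finite_measure_mono[OF _ gsets(1)]) auto
        then show ?thesis unfolding T_def using nM k2 by simp
      qed
      have Tlow: "t \<ge> - Rn" if "t \<in> T" for t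
      proof (rule ccontr)
        assume "\<not> t \<ge> - Rn"
        then have "{x\<in>M. g x \<le> t} \<subseteq> space m - {x\<in>M. \<bar>g x\<bar> \<le> Rn}" using sp by auto
        then have "measure m {x\<in>M. g x \<le> t} \<le> measure m (space m - {x\<in>M. \<bar>g x\<bar> \<le> Rn})"
          by (rule finite_measure_mono) (use gsets(3) in auto)
        also have "\<dots> = 1 - measure m {x\<in>M. \<bar>g x\<bar> \<le> Rn}" using prob_compl gsets(3) by blast
        finally show False using that nM unfolding T_def by simp
      qed
      have Tne: "T \<noteq> {}" using RT by blast
      have Tbdd: "bdd_below T" using Tlow by (intro bdd_belowI) blast
      define a where "a = Inf T"
      show "z \<le> ereal (4 * F D)"
      proof (rule ereal_le_epsilon2)
        fix \<epsilon> :: real assume ep: "\<epsilon> > 0"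
        have "D \<in> {0..}" using D0 by simp
        from cont[unfolded continuous_on_iff, rule_format, OF this, of "\<epsilon>/8"] ep
        obtain \<eta> where eta: "\<eta> > 0" "\<And>t. t \<in> {0..} \<Longrightarrow> dist t D < \<eta> \<Longrightarrow> dist (F t) (F D) < \<epsilon>/8" by auto
        define \<delta> where "\<delta> = \<eta>/2"
        have dp: "\<delta> > 0" using eta(1) \<delta>_def by simp
        have FDd: "F (D + \<delta>) < F D + \<epsilon>/8"
        proof -
          have "dist (F (D + \<delta>)) (F D) < \<epsilon>/8"
            using eta(2)[of "D + \<delta>"] D0 dp unfolding \<delta>_def using eta(1) by (simp add: dist_real_def)
          then show ?thesis unfolding dist_real_def by linarith
        qed
        have FDd0: "F (D + \<delta>) \<ge> 0" using mp_nonneg[OF mp] D0 dp by simp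
        obtain a' where a': "a' \<in> T" "a' < a + \<epsilon>/4"
          using cInf_lessD[OF Tne, of "a + \<epsilon>/4"] ep unfolding a_def by auto
        have aa: "a \<le> a'" unfolding a_def using a'(1) Tbdd by (rule cInf_lower)
        define b' where "b' = a - \<epsilon>/4"
        have "b' \<notin> T"
        proof
          assume "b' \<in> T"
          then have "a \<le> b'" unfolding a_def using Tbdd by (rule cInf_lower)
          then show False using ep b'_def by simp
        qed
        then have "measure m {x\<in>M. g x \<le> b'} \<le> \<kappa>" unfolding T_def by simp
        moreover have "{x\<in>M. - g x \<le> - b'} \<supseteq> space m - {x\<in>M. g x \<le> b'}" using sp by auto
        then have "measure m (space m - {x\<in>M. g x \<le> b'}) \<le> measure m {x\<in>M. - g x \<le> - b'}"
          by (rule finite_measure_mono) (use gsets(2) in simp)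
        moreover have "measure m (space m - {x\<in>M. g x \<le> b'}) = 1 - measure m {x\<in>M. g x \<le> b'}"
          using prob_compl gsets(1) by blast
        ultimately have nb: "measure m {x\<in>M. - g x \<le> - b'} > \<kappa>" using k2 by linarith
        have P: "measure m {x\<in>M. g x \<le> a' + 2 * F (D + \<delta>)} \<ge> 1 - \<kappa>"
          using keyK[OF cont mp mm kp OD D0 g gm _ dp] a'(1) unfolding T_def by simp
        have Q0: "measure m {x\<in>M. - g x \<le> - b' + 2 * F (D + \<delta>)} \<ge> 1 - \<kappa>"
          using keyK[OF cont mp mm kp OD D0 ng ngm nb dp] .
        have Qeq: "{x\<in>M. - g x \<le> - b' + 2 * F (D + \<delta>)} = {x\<in>M. b' - 2 * F (D + \<delta>) \<le> g x}" by auto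
        have Q: "measure m {x\<in>M. b' - 2 * F (D + \<delta>) \<le> g x} \<ge> 1 - \<kappa>" using Q0 Qeq by simp
        define I where "I = {b' - 2 * F (D + \<delta>) .. a' + 2 * F (D + \<delta>)}"
        have Ib: "I \<in> sets borel" unfolding I_def by simp
        have pre: "g -` I \<inter> space m = {x\<in>M. g x \<le> a' + 2 * F (D + \<delta>)} \<inter> {x\<in>M. b' - 2 * F (D + \<delta>) \<le> g x}"
          unfolding I_def using sp by auto
        have "measure m ({x\<in>M. g x \<le> a' + 2 * F (D + \<delta>)} \<inter> {x\<in>M. b' - 2 * F (D + \<delta>) \<le> g x}) \<ge> 1 - 2 * \<kappa>"
          using inter_measure[OF prob_space_axioms gsets(1)[of "a' + 2 * F (D + \<delta>)"] gsets(2)[of "b' - 2 * F (D + \<delta>)"]] P Q by linarith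
        then have "measure (distr m borel g) I \<ge> 1 - 2 * \<kappa>" using measure_distr[OF gm Ib] pre by simp
        then have "z \<le> ediam (\<lambda>s t. \<bar>s - t\<bar>) I" unfolding z using Ib by (intro pd_le) auto
        also have "\<dots> \<le> ereal (a' - b' + 4 * F (D + \<delta>))" unfolding I_def
          by (rule ediam_le) (use aa b'_def ep FDd0 in auto)
        also have "\<dots> \<le> ereal (4 * F D) + ereal \<epsilon>" using a'(2) b'_def FDd by simp
        finally show "z \<le> ereal (4 * F D) + ereal \<epsilon>" .
      qed
    qed
  qed
  then show ?thesis unfolding D_def .
qed

theorem mainTheorem6:
  fixes F :: "real \<Rightarrow> real"
    and M :: "'a set" and d :: "'a \<Rightarrow> 'a \<Rightarrow> real" and m :: "'a measure"
  assumes "continuous_on {0..} F"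
    and "metric_preserving F"
    and "mm_space M d m"
  shows "(\<forall>s>0. (SUP \<epsilon>\<in>{0<..}. concentration M (\<lambda>x y. F (d x y)) m (2 * F s + \<epsilon>))
                   \<le> concentration M d m s)
      \<and> (\<forall>\<kappa>>0. observable_diameter M (\<lambda>x y. F (d x y)) m (2 * \<kappa>)
                 \<le> ereal (4 * F (real_of_ereal (observable_diameter M d m \<kappa>))))"
  using part1[OF assms] part2[OF assms] by blast


end
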